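(* Let $S(A)=\{a_n\}$ be independent and $S(B)=\{b_n\}$ be regular. Let $k$ be adequate with respect to $S(A)$. Let $A^{\ast}=\{a_0,a_1,\ldots,a_{2^k-1}\}$ and define $$A\otimes_k B=\{a_{2^k}b+a\mid a\in A^{\ast},\ b\in B\}.$$ Then $S(A\otimes_k B)$ is a regular Stanley sequence, which is independent if and only if $S(B)$ is, having description $$S(A\otimes_k B)=\{a_{2^k}b+a\mid a\in A^{\ast},\ b\in S(B)\},$$ with character $\lambda(A\otimes_k B)=a_{2^k}\cdot \lambda(B)+\lambda(A)$ and shift index $\sigma(A\otimes_k B)=2^k\cdot \sigma(B)$.
   Context: A set of nonnegative integers is 3-free if no three elements form an arithmetic progression. For a 3-free set $A=\{a_0<\cdots<a_k\}$ (all sequences assumed to start at $0$), the Stanley sequence $S(A)=\{a_n\}$ is defined greedily: each $a_{n+1}$ is the smallest integer greater than $a_n$ such that $\{a_0,\ldots,a_{n+1}\}$ is 3-free. A Stanley sequence $S(A)=\{a_n\}$ is independent if there is a constant $\lambda$ (its character $\lambda(A)$) such that for all sufficiently large $k$ and all $0\le i<2^k$, $a_{2^k+i}=a_{2^k}+a_i$ and $a_{2^k}=2a_{2^k-1}-\lambda+1$. A Stanley sequence $S(A)=\{a_n\}$ is regular if there exist constants $\lambda,\sigma$ and an independent Stanley sequence $\{a'_n\}$ of character $\lambda$ (the core) such that for all large $k$ and $0\le i<2^k$, $a_{2^k-\sigma+i}=a_{2^k-\sigma}+a'_i$ and $a_{2^k-\sigma}=2a_{2^k-\sigma-1}-\lambda+1$;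 these constants are unique, and $\lambda$ is called the character $\lambda(A)$ and $\sigma$ the shift index $\sigma(A)$. Independent sequences are exactly the regular ones with $\sigma=0$ and core equal to themselves. An integer $k_0$ is adequate for a regular sequence $S(A)$ if (i) the two defining equations hold for all $k\ge k_0$ and (ii) $a_{2^{k_0}-\sigma(A)}$ is not contained in the minimal-cardinality nucleating set of $S(A)$. *)

theory Defs
  imports Main "HOL-Library.Infinite_Set"
begin

definition three_free :: "nat set \<Rightarrow> bool" where
  "three_free S \<longleftrightarrow> (\<forall>x\<in>S. \<forall>y\<in>S. \<forall>z\<in>S. x < y \<and> y < z \<longrightarrow> x + z \<noteq> 2 * y)"

definition stanley_base :: "nat set \<Rightarrow> bool" where
  "stanley_base A \<longleftrightarrow> finite A \<and> 0 \<in> A \<and> three_free A"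

primrec stan_pre :: "nat set \<Rightarrow> nat \<Rightarrow> nat set" where
  "stan_pre A 0 = A"
| "stan_pre A (Suc n) =
     insert (LEAST x. Max (stan_pre A n) < x \<and> three_free (insert x (stan_pre A n))) (stan_pre A n)"

definition stanley_set :: "nat set \<Rightarrow> nat set" where
  "stanley_set A = (\<Union>n. stan_pre A n)"

definition stanley_seq :: "nat set \<Rightarrow> nat \<Rightarrow> nat" where
  "stanley_seq A = enumerate (stanley_set A)"

definition independent_with :: "nat set \<Rightarrow> int \<Rightarrow> bool" where
  "independent_with A lam \<longleftrightarrow> stanley_base A \<and>
     (\<exists>K. \<forall>k\<ge>K. \<forall>i<2^k.
        int (stanley_seq A (2^k + i)) = int (stanley_seq A (2^k)) + int (stanley_seq A i) \<and>
        int (stanley_seq A (2^k)) = 2 * int (stanley_seq A (2^k - 1)) - lam + 1)"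

definition independent :: "nat set \<Rightarrow> bool" where
  "independent A \<longleftrightarrow> (\<exists>lam. independent_with A lam)"

definition regular_eqs :: "nat set \<Rightarrow> nat set \<Rightarrow> int \<Rightarrow> int \<Rightarrow> nat \<Rightarrow> bool" where
  "regular_eqs A C lam sig k \<longleftrightarrow> sig < 2^k \<and>
     (\<forall>i<2^k.
        int (stanley_seq A (nat (2^k - sig) + i)) =
          int (stanley_seq A (nat (2^k - sig))) + int (stanley_seq C i) \<and>
        int (stanley_seq A (nat (2^k - sig))) =
          2 * int (stanley_seq A (nat (2^k - sig - 1))) - lam + 1)"

definition regular_with :: "nat set \<Rightarrow> int \<Rightarrow> int \<Rightarrow> bool" where
  "regular_with A lam sig \<longleftrightarrow> stanley_base A \<and>
     (\<exists>C. independent_with C lam \<and> (\<exists>K. \<forall>k\<ge>K. regular_eqs A C lam sig k))"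

definition regular :: "nat set \<Rightarrow> bool" where
  "regular A \<longleftrightarrow> (\<exists>lam sig. regular_with A lam sig)"

definition character :: "nat set \<Rightarrow> int" where
  "character A = (THE lam. \<exists>sig. regular_with A lam sig)"

definition shift_index :: "nat set \<Rightarrow> int" where
  "shift_index A = (THE sig. \<exists>lam. regular_with A lam sig)"

definition nucleates :: "nat set \<Rightarrow> nat set \<Rightarrow> bool" where
  "nucleates N A \<longleftrightarrow> stanley_base N \<and> stanley_set N = stanley_set A"

definition min_nucleating :: "nat set \<Rightarrow> nat set \<Rightarrow> bool" where
  "min_nucleating N A \<longleftrightarrow> nucleates N A \<and> (\<forall>N'. nucleates N' A \<longrightarrow> card N \<le> card N')"

definition adequate :: "nat set \<Rightarrow> nat \<Rightarrow> bool" where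
  "adequate A k0 \<longleftrightarrow> regular A \<and>
     (\<exists>C. independent_with C (character A) \<and>
          (\<forall>k\<ge>k0. regular_eqs A C (character A) (shift_index A) k)) \<and>
     (\<forall>N. min_nucleating N A \<longrightarrow> stanley_seq A (nat (2^k0 - shift_index A)) \<notin> N)"

definition otimes :: "nat set \<Rightarrow> nat \<Rightarrow> nat set \<Rightarrow> nat set" where
  "otimes A k B = {stanley_seq A (2^k) * b + a | a b. a \<in> stanley_seq A ` {..<2^k} \<and> b \<in> B}"

end

theory Submission
  imports Defs
begin

lemma tf_mono: "three_free T \<Longrightarrow> S \<subseteq> T \<Longrightarrow> three_free S"
  unfolding three_free_def by blast

lemma tf_witness:
  assumes "finite P" "P \<noteq> {}" "three_free P"
  shows "three_free (insert (2 * Max P + 1) P)"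
proof -
  have le: "\<And>y. y \<in> P \<Longrightarrow> y \<le> Max P" using assms(1) by simp
  show ?thesis unfolding three_free_def
  proof (intro ballI impI)
    fix x y z assume xyz: "x \<in> insert (2 * Max P + 1) P" "y \<in> insert (2 * Max P + 1) P"
      "z \<in> insert (2 * Max P + 1) P" "x < y \<and> y < z"
    show "x + z \<noteq> 2 * y"
    proof (cases "z = 2 * Max P + 1")
      case True
      then have "y \<in> P" using xyz by auto
      then show ?thesis using le[of y] True by simp
    next
      case False
      then have "z \<in> P" using xyz by auto
      then have "y \<in> P" "x \<in> P" using le[of z] xyz by auto
      then show ?thesis using \<open>z \<in> P\<close> assms(3) xyz(4) unfolding three_free_def by blast
    qed
  qed
qed

definition nxt :: "nat set \<Rightarrow> nat" where
  "nxt P = (LEAST x. Max P < x \<and> three_free (insert x P))"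

lemma nxt_prop:
  assumes "finite P" "P \<noteq> {}" "three_free P"
  shows "Max P < nxt P \<and> three_free (insert (nxt P) P)"
    and "\<And>x. Max P < x \<Longrightarrow> x < nxt P \<Longrightarrow> \<not> three_free (insert x P)"
proof -
  have ex: "Max P < 2 * Max P + 1 \<and> three_free (insert (2 * Max P + 1) P)"
    using tf_witness[OF assms] by simp
  show "Max P < nxt P \<and> three_free (insert (nxt P) P)"
    unfolding nxt_def by (rule LeastI[of _ "2 * Max P + 1"], rule ex)
  show "\<And>x. Max P < x \<Longrightarrow> x < nxt P \<Longrightarrow> \<not> three_free (insert x P)"
    unfolding nxt_def using not_less_Least by blast
qed

lemma stan_pre_Suc': "stan_pre A (Suc n) = insert (nxt (stan_pre A n)) (stan_pre A n)"
  by (simp add: nxt_def)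

declare stan_pre.simps(2)[simp del]

lemma stan_pre_props:
  assumes "stanley_base A"
  shows "finite (stan_pre A n) \<and> A \<subseteq> stan_pre A n \<and> three_free (stan_pre A n)"
proof (induction n)
  case 0
  then show ?case using assms by (simp add: stanley_base_def)
next
  case (Suc n)
  have ne: "stan_pre A n \<noteq> {}" using Suc assms by (auto simp: stanley_base_def)
  show ?case using Suc nxt_prop(1)[OF _ ne] by (auto simp: stan_pre_Suc')
qed

lemma stan_pre_ne: "stanley_base A \<Longrightarrow> stan_pre A n \<noteq> {}"
  using stan_pre_props[of A n] by (auto simp: stanley_base_def)

lemma stan_pre_Max_Suc:
  assumes "stanley_base A"
  shows "Max (stan_pre A (Suc n)) = nxt (stan_pre A n) \<and> Max (stan_pre A n) < nxt (stan_pre A n)"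
proof -
  let ?P = "stan_pre A n"
  have f: "finite ?P" and t: "three_free ?P" using stan_pre_props[OF assms] by auto
  have lt: "Max ?P < nxt ?P" using nxt_prop(1)[OF f stan_pre_ne[OF assms] t] by simp
  have "Max (insert (nxt ?P) ?P) = max (nxt ?P) (Max ?P)"
    using f stan_pre_ne[OF assms] by simp
  then show ?thesis using lt by (simp add: stan_pre_Suc')
qed

lemma stan_pre_mono: "m \<le> n \<Longrightarrow> stan_pre A m \<subseteq> stan_pre A n"
proof (induction n)
  case 0 then show ?case by simp
next
  case (Suc n) then show ?case by (auto simp: le_Suc_eq stan_pre_Suc')
qed

lemma stan_pre_Max_ge: "stanley_base A \<Longrightarrow> n \<le> Max (stan_pre A n)"
proof (induction n)
  case 0 then show ?case by simp
next
  case (Suc n) then show ?case using stan_pre_Max_Suc[of A n] by simp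
qed

lemma stan_pre_Max_in: "stanley_base A \<Longrightarrow> Max (stan_pre A n) \<in> stanley_set A"
  unfolding stanley_set_def using stan_pre_props[of A n] stan_pre_ne[of A n]
  by (intro UnionI[of "stan_pre A n"]) auto

lemma stanley_set_infinite: "stanley_base A \<Longrightarrow> infinite (stanley_set A)"
  unfolding infinite_nat_iff_unbounded_le
  using stan_pre_Max_in stan_pre_Max_ge by blast

lemma stanley_set_sub: "A \<subseteq> stanley_set A"
  unfolding stanley_set_def by (metis UN_upper UNIV_I stan_pre.simps(1))

lemma stanley_set_tf:
  assumes "stanley_base A" shows "three_free (stanley_set A)"
  unfolding three_free_def
proof (intro ballI impI)
  fix x y z assume xyz: "x \<in> stanley_set A" "y \<in> stanley_set A" "z \<in> stanley_set A" "x < y \<and> y < z"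
  obtain i j l where ij: "x \<in> stan_pre A i" "y \<in> stan_pre A j" "z \<in> stan_pre A l"
    using xyz(1-3) unfolding stanley_set_def by auto
  let ?n = "max i (max j l)"
  have "x \<in> stan_pre A ?n" "y \<in> stan_pre A ?n" "z \<in> stan_pre A ?n"
    using ij stan_pre_mono[of i ?n A] stan_pre_mono[of j ?n A] stan_pre_mono[of l ?n A] by (auto simp: max_def split: if_splits)
  then show "x + z \<noteq> 2 * y" using stan_pre_props[OF assms, of ?n] xyz(4)
    unfolding three_free_def by blast
qed

lemma stan_pre_low:
  assumes "stanley_base A"
  shows "x \<in> stan_pre A n \<Longrightarrow> x \<le> Max A \<Longrightarrow> x \<in> A"
proof (induction n)
  case 0 then show ?case by simp
next
  case (Suc n)
  have "Max A \<le> Max (stan_pre A n)"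
    using stan_pre_props[OF assms, of n] assms by (intro Max_mono) (auto simp: stanley_base_def)
  then show ?case using Suc stan_pre_Max_Suc[OF assms, of n] by (auto simp: stan_pre_Suc')
qed

lemma stanley_set_low:
  assumes "stanley_base A" "x \<le> Max A"
  shows "x \<in> stanley_set A \<longleftrightarrow> x \<in> A"
  using stan_pre_low[OF assms(1) _ assms(2)] stanley_set_sub[of A]
  unfolding stanley_set_def by blast

lemma stanley_set_greedy:
  assumes B: "stanley_base A" and x: "Max A < x" "x \<notin> stanley_set A"
  shows "\<exists>y\<in>stanley_set A. \<exists>z\<in>stanley_set A. z < y \<and> y < x \<and> z + x = 2 * y"
proof -
  have "\<exists>n. Max (stan_pre A n) < x \<and> x \<le> Max (stan_pre A (Suc n))"
  proof (rule ccontr)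
    assume "\<not> ?thesis"
    then have step: "\<And>n. Max (stan_pre A n) < x \<Longrightarrow> Max (stan_pre A (Suc n)) < x" by force
    have "\<And>n. Max (stan_pre A n) < x"
    proof -
      fix n show "Max (stan_pre A n) < x"
        by (induction n) (use x step in auto)
    qed
    then show False using stan_pre_Max_ge[OF B, of x] by (metis not_le)
  qed
  then obtain n where n: "Max (stan_pre A n) < x" "x \<le> Max (stan_pre A (Suc n))" by blast
  let ?P = "stan_pre A n"
  have f: "finite ?P" and t: "three_free ?P" using stan_pre_props[OF B] by auto
  have mx: "Max (stan_pre A (Suc n)) = nxt ?P" using stan_pre_Max_Suc[OF B] by simp
  have "nxt ?P \<in> stanley_set A" using stan_pre_Max_in[OF B, of "Suc n"] mx by simp
  then have "x < nxt ?P" using n mx x(2) by (metis le_neq_implies_less)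
  then have nt: "\<not> three_free (insert x ?P)" using nxt_prop(2)[OF f stan_pre_ne[OF B] t n(1)] by simp
  have le: "\<And>u. u \<in> ?P \<Longrightarrow> u < x" using n(1) f by (meson Max_ge le_less_trans)
  have sub: "?P \<subseteq> stanley_set A" unfolding stanley_set_def by blast
  from nt t obtain a b c where abc: "a \<in> insert x ?P" "b \<in> insert x ?P" "c \<in> insert x ?P"
      "a < b" "b < c" "a + c = 2 * b"
    unfolding three_free_def by blast
  have "c = x" using abc le t unfolding three_free_def
    by (metis insertE less_asym)
  moreover have "a \<in> ?P" "b \<in> ?P" using abc calculation le by auto
  ultimately show ?thesis using abc sub by blast
qed

definition gset :: "nat set \<Rightarrow> nat \<Rightarrow> bool" where
  "gset T u \<longleftrightarrow> three_free T \<and> (\<forall>x>u. x \<notin> T \<longrightarrow> (\<exists>y\<in>T. \<exists>z\<in>T. z < y \<and> y < x \<and> z + x = 2 * y))"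

lemma gset_unique:
  assumes "gset T u" "gset T' u" "\<And>x. x \<le> u \<Longrightarrow> x \<in> T \<longleftrightarrow> x \<in> T'"
  shows "T = T'"
proof -
  have "\<And>x. x \<in> T \<longleftrightarrow> x \<in> T'"
  proof -
    fix x show "x \<in> T \<longleftrightarrow> x \<in> T'"
    proof (induction x rule: less_induct)
      case (less x)
      show ?case
      proof (cases "x \<le> u")
        case True then show ?thesis using assms(3) by simp
      next
        case False
        then have xu: "u < x" by simp
        show ?thesis
        proof
          assume xT: "x \<in> T"
          show "x \<in> T'"
          proof (rule ccontr)
            assume "x \<notin> T'"
            then obtain y z where "y \<in> T'" "z \<in> T'" "z < y" "y < x" "z + x = 2 * y"
              using assms(2) xu unfolding gset_def by blast
            then show False using less xT assms(1) unfolding gset_def three_free_def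
              by (metis less_trans)
          qed
        next
          assume xT: "x \<in> T'"
          show "x \<in> T"
          proof (rule ccontr)
            assume "x \<notin> T"
            then obtain y z where "y \<in> T" "z \<in> T" "z < y" "y < x" "z + x = 2 * y"
              using assms(1) xu unfolding gset_def by blast
            then show False using less xT assms(2) unfolding gset_def three_free_def
              by (metis less_trans)
          qed
        qed
      qed
    qed
  qed
  then show ?thesis by blast
qed

lemma stanley_gset: "stanley_base A \<Longrightarrow> gset (stanley_set A) (Max A)"
  unfolding gset_def using stanley_set_tf stanley_set_greedy by blast

lemma stanley_set_eqI:
  assumes "stanley_base A" "gset T (Max A)" "\<And>x. x \<le> Max A \<Longrightarrow> x \<in> T \<longleftrightarrow> x \<in> A"
  shows "stanley_set A = T"
  using gset_unique[OF stanley_gset[OF assms(1)] assms(2)] stanley_set_low[OF assms(1)] assms(3)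
  by blast

lemma strict_mono_range_eq:
  fixes f g :: "nat \<Rightarrow> nat"
  assumes f: "strict_mono f" and g: "strict_mono g" and r: "range f = range g"
  shows "f = g"
proof
  fix n show "f n = g n"
  proof (induction n rule: less_induct)
    case (less n)
    obtain j where j: "f n = g j" using r by (metis rangeE range_eqI)
    obtain i where i: "g n = f i" using r by (metis rangeE range_eqI)
    have "\<not> j < n" using less j f g by (metis less.IH strict_mono_less less_irrefl)
    then have "g n \<le> f n" using j g by (simp add: strict_mono_less_eq)
    have "\<not> i < n" using less i f g by (metis less.IH strict_mono_less less_irrefl)
    then have "f n \<le> g n" using i f by (simp add: strict_mono_less_eq)
    then show ?case using \<open>g n \<le> f n\<close> by simp
  qed
qed

lemma seq_strict_mono: "stanley_base A \<Longrightarrow> strict_mono (stanley_seq A)"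
  unfolding stanley_seq_def using strict_mono_enumerate stanley_set_infinite by blast

lemma seq_range: "stanley_base A \<Longrightarrow> range (stanley_seq A) = stanley_set A"
  unfolding stanley_seq_def using range_enumerate stanley_set_infinite by blast

lemma seq_in: "stanley_base A \<Longrightarrow> stanley_seq A n \<in> stanley_set A"
  using seq_range by blast

lemma seq_less: "stanley_base A \<Longrightarrow> stanley_seq A i < stanley_seq A j \<longleftrightarrow> i < j"
  using seq_strict_mono strict_mono_less by blast

lemma seq_le: "stanley_base A \<Longrightarrow> stanley_seq A i \<le> stanley_seq A j \<longleftrightarrow> i \<le> j"
  using seq_strict_mono strict_mono_less_eq by blast

lemma seq_0: "stanley_base A \<Longrightarrow> stanley_seq A 0 = 0"
proof -
  assume B: "stanley_base A"
  have "0 \<in> stanley_set A" using B stanley_set_sub by (auto simp: stanley_base_def)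
  then show ?thesis unfolding stanley_seq_def enumerate_0 by (simp add: Least_eq_0)
qed

lemma seq_eqI: "stanley_base A \<Longrightarrow> strict_mono f \<Longrightarrow> range f = stanley_set A \<Longrightarrow> stanley_seq A = f"
  using strict_mono_range_eq seq_strict_mono seq_range by metis

lemma seq_below:
  assumes "stanley_base A" "u \<in> stanley_set A" "u < stanley_seq A n"
  shows "\<exists>j<n. u = stanley_seq A j"
proof -
  obtain j where "u = stanley_seq A j" using assms seq_range by blast
  then show ?thesis using assms seq_less by blast
qed

lemma regeq_jump: "regular_eqs X C l s k \<Longrightarrow>
   int (stanley_seq X (nat (2^k - s))) = 2 * int (stanley_seq X (nat (2^k - s - 1))) - l + 1"
  unfolding regular_eqs_def by (metis zero_less_numeral zero_less_power)

lemma regeq_add: "regular_eqs X C l s k \<Longrightarrow> i < 2^k \<Longrightarrow>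
   int (stanley_seq X (nat (2^k - s) + i)) = int (stanley_seq X (nat (2^k - s))) + int (stanley_seq C i)"
  unfolding regular_eqs_def by blast

lemma regeq_lt: "regular_eqs X C l s k \<Longrightarrow> s < 2^k"
  unfolding regular_eqs_def by blast

lemma reg_level:
  assumes e1: "regular_eqs X C1 l1 s1 k" and e2: "regular_eqs X C2 l2 s2 k"
    and lt: "s2 < s1" "s1 - s2 < 2^k"
  shows "int (stanley_seq X (nat (2^k - s1))) =
           int (stanley_seq C1 (nat (s1 - s2))) - 2 * int (stanley_seq C1 (nat (s1 - s2) - 1)) + l2 - 1"
proof -
  let ?p = "nat (2^k - s1)" and ?d = "nat (s1 - s2)"
  have s1: "s1 < 2^k" and s2: "s2 < 2^k" using e1 e2 by (auto simp: regular_eqs_def)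
  have d1: "?d \<ge> 1" "?d < 2^k" using lt by auto
  have p2: "nat (2^k - s2) = ?p + ?d" using s1 lt by auto
  have p3: "nat (2^k - s2 - 1) = ?p + (?d - 1)" using s1 lt by auto
  have A1: "int (stanley_seq X (?p + ?d)) = int (stanley_seq X ?p) + int (stanley_seq C1 ?d)"
    using e1 d1 unfolding regular_eqs_def by blast
  have A2: "int (stanley_seq X (?p + (?d - 1))) = int (stanley_seq X ?p) + int (stanley_seq C1 (?d - 1))"
  proof -
    have "?d - 1 < 2^k" using d1(2) by (meson diff_le_self le_less_trans)
    then show ?thesis using e1 unfolding regular_eqs_def by blast
  qed
  have B: "int (stanley_seq X (nat (2^k - s2))) = 2 * int (stanley_seq X (nat (2^k - s2 - 1))) - l2 + 1"
    using regeq_jump[OF e2] .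
  show ?thesis using A1 A2 B unfolding p2 p3 by linarith
qed

lemma reg_unique:
  assumes B: "stanley_base X"
    and e1: "\<forall>k\<ge>K1. regular_eqs X C1 l1 s1 k" and e2: "\<forall>k\<ge>K2. regular_eqs X C2 l2 s2 k"
  shows "s1 = s2 \<and> l1 = l2"
proof -
  have main: "False" if e1: "\<forall>k\<ge>K1. regular_eqs X C1 l1 s1 k" and e2: "\<forall>k\<ge>K2. regular_eqs X C2 l2 s2 k"
      and lt: "s2 < s1" for C1 C2 l1 l2 s1 s2 K1 K2
  proof -
    define k where "k = max K1 K2 + nat (s1 - s2)"
    have kk: "k \<ge> K1" "k \<ge> K2" "Suc k \<ge> K1" "Suc k \<ge> K2" unfolding k_def by auto
    have "int (nat (s1 - s2)) < 2^k"
    proof -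
      have "nat (s1 - s2) < 2^k" unfolding k_def
        by (meson le_add2 less_exp order_le_less_trans)
      then show ?thesis by (metis of_nat_less_iff of_nat_numeral of_nat_power)
    qed
    then have dk: "s1 - s2 < 2^k" "s1 - s2 < 2^Suc k" using lt by auto
    have L1: "int (stanley_seq X (nat (2^k - s1))) = int (stanley_seq C1 (nat (s1 - s2))) - 2 * int (stanley_seq C1 (nat (s1 - s2) - 1)) + l2 - 1"
      using reg_level[OF e1[rule_format, OF kk(1)] e2[rule_format, OF kk(2)] lt dk(1)] .
    have L2: "int (stanley_seq X (nat (2^Suc k - s1))) = int (stanley_seq C1 (nat (s1 - s2))) - 2 * int (stanley_seq C1 (nat (s1 - s2) - 1)) + l2 - 1"
      using reg_level[OF e1[rule_format, OF kk(3)] e2[rule_format, OF kk(4)] lt dk(2)] .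
    have s1k: "s1 < 2^k" using e1 kk unfolding regular_eqs_def by blast
    have pos: "(0::int) < 2^k" by simp
    have "2^k - s1 < 2^Suc k - s1" "0 \<le> 2^k - s1" using s1k pos by auto
    then have "nat (2^k - s1) < nat (2^Suc k - s1)" by linarith
    then have "stanley_seq X (nat (2^k - s1)) < stanley_seq X (nat (2^Suc k - s1))"
      using seq_less[OF B] by blast
    then show False using L1 L2 by linarith
  qed
  have "s1 = s2" using main[OF e1 e2] main[OF e2 e1] by (meson linorder_neqE)
  moreover
  define k where "k = max K1 K2"
  have a: "regular_eqs X C1 l1 s1 k" "regular_eqs X C2 l2 s1 k" using e1 e2 \<open>s1 = s2\<close> unfolding k_def by auto
  have "l1 = l2" using regeq_jump[OF a(1)] regeq_jump[OF a(2)] by linarith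
  ultimately show ?thesis by simp
qed

lemma regular_with_unique:
  "regular_with X l1 s1 \<Longrightarrow> regular_with X l2 s2 \<Longrightarrow> s1 = s2 \<and> l1 = l2"
  unfolding regular_with_def using reg_unique by metis

lemma character_eq: "regular_with X l s \<Longrightarrow> character X = l"
  unfolding character_def
  by (rule the_equality) (auto dest: regular_with_unique)

lemma shift_index_eq: "regular_with X l s \<Longrightarrow> shift_index X = s"
  unfolding shift_index_def
  by (rule the_equality) (auto dest: regular_with_unique)

locale pctx =
  fixes A :: "nat set" and k :: nat and lam :: int and N :: "nat set"
  assumes base: "stanley_base A"
    and add1: "\<And>i. i < 2^k \<Longrightarrow> stanley_seq A (2^k + i) = stanley_seq A (2^k) + stanley_seq A i"
    and jump1: "int (stanley_seq A (2^k)) = 2 * int (stanley_seq A (2^k - 1)) - lam + 1"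
    and add2: "\<And>i. i < 2^Suc k \<Longrightarrow> stanley_seq A (2^Suc k + i) = stanley_seq A (2^Suc k) + stanley_seq A i"
    and jump2: "int (stanley_seq A (2^Suc k)) = 2 * int (stanley_seq A (2^Suc k - 1)) - lam + 1"
    and nbase: "stanley_base N" and nset: "stanley_set N = stanley_set A"
    and nmax: "Max N < stanley_seq A (2^k)"
begin

abbreviation "a \<equiv> stanley_seq A"
abbreviation "m \<equiv> stanley_seq A (2^k)"
abbreviation "M \<equiv> stanley_seq A (2^k - 1)"
abbreviation "Ast \<equiv> stanley_seq A ` {..<2^k}"

lemma a_le_M: "i < 2^k \<Longrightarrow> a i \<le> M"
  using seq_le[OF base] by simp

lemma M_lt_m: "M < m"
  using seq_less[OF base] by simp

lemma Ast_le: "c \<in> Ast \<Longrightarrow> c \<le> M"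
  using a_le_M by auto

lemma Ast_lt: "c \<in> Ast \<Longrightarrow> c < m"
  using Ast_le M_lt_m by fastforce

lemma Ast_in: "c \<in> Ast \<Longrightarrow> c \<in> stanley_set A"
  using seq_in[OF base] by auto

lemma zero_Ast: "0 \<in> Ast"
  using seq_0[OF base] by (metis image_eqI lessThan_iff zero_less_numeral zero_less_power)

lemma M_Ast: "M \<in> Ast" by auto

lemma m_Ast: "c \<in> Ast \<Longrightarrow> m + c \<in> stanley_set A"
  using add1 seq_in[OF base] by (metis imageE lessThan_iff)

lemma a3: "a (2^Suc k) = 3 * m"
proof -
  have "(2::nat)^Suc k - 1 = 2^k + (2^k - 1)" by simp
  then have "a (2^Suc k - 1) = m + M" using add1[of "2^k - 1"] by simp
  then show ?thesis using jump1 jump2 by linarith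
qed

lemma a4: "a (2^Suc k + 2^k) = 4 * m"
  using add2[of "2^k"] a3 by simp

lemma below_m: "u \<in> stanley_set A \<Longrightarrow> u < m \<Longrightarrow> u \<in> Ast"
  using seq_below[OF base] by blast

lemma below_4m:
  assumes "u \<in> stanley_set A" "u < 4 * m"
  shows "u \<in> Ast \<or> (\<exists>c\<in>Ast. u = m + c) \<or> (\<exists>c\<in>Ast. u = 3 * m + c)"
proof -
  obtain j where j: "j < 2^Suc k + 2^k" "u = a j" using seq_below[OF base assms(1)] assms(2) a4 by metis
  show ?thesis
  proof (cases "j < 2^k")
    case True then show ?thesis using j by auto
  next
    case False
    show ?thesis
    proof (cases "j < 2^Suc k")
      case True
      define i where "i = j - 2^k"
      have "i < 2^k" "j = 2^k + i" using True False unfolding i_def by auto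
      then show ?thesis using add1[of i] j by auto
    next
      case F2: False
      define i where "i = j - 2^Suc k"
      have "i < 2^k" "j = 2^Suc k + i" using j F2 unfolding i_def by auto
      then show ?thesis using add2[of i] j a3 by auto
    qed
  qed
qed

lemma tfA: "three_free (stanley_set A)" using stanley_set_tf[OF base] .

lemma cover:
  assumes r: "r < m" "r \<notin> Ast"
  shows "(\<exists>y\<in>Ast. \<exists>z\<in>Ast. z < y \<and> y < r \<and> z + r = 2 * y) \<or> (r \<le> M \<and> (\<exists>y\<in>Ast. \<exists>z\<in>Ast. 2 * y = z + r + m))"
proof -
  have maxN: "Max N \<le> M"
  proof -
    have "Max N \<in> N" using nbase by (metis Max_in empty_iff stanley_base_def)
    then have "Max N \<in> stanley_set A" using nset stanley_set_sub[of N] by auto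
    then show ?thesis using below_m nmax Ast_le by blast
  qed
  show ?thesis
  proof (cases "M < r")
    case True
    have "r \<notin> stanley_set N" using nset below_m r by auto
    then obtain y z where yz: "y \<in> stanley_set A" "z \<in> stanley_set A" "z < y" "y < r" "z + r = 2 * y"
      using stanley_set_greedy[OF nbase, of r] True maxN nset by auto
    then have "y \<in> Ast" "z \<in> Ast" using below_m r by auto
    then show ?thesis using yz by blast
  next
    case False
    let ?x = "3 * m + r"
    have "?x \<notin> stanley_set A"
    proof
      assume "?x \<in> stanley_set A"
      moreover have "?x < 4 * m" using r by simp
      ultimately have "?x \<in> Ast \<or> (\<exists>c\<in>Ast. ?x = m + c) \<or> (\<exists>c\<in>Ast. ?x = 3 * m + c)"
        using below_4m by blast
      then show False
      proof (elim disjE bexE)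
        assume "?x \<in> Ast" then show False using Ast_lt by fastforce
      next
        fix c assume "c \<in> Ast" "?x = m + c" then show False using Ast_lt[of c] by linarith
      next
        fix c assume "c \<in> Ast" "?x = 3 * m + c" then show False using r by simp
      qed
    qed
    then obtain y z where yz: "y \<in> stanley_set A" "z \<in> stanley_set A" "z < y" "y < ?x" "z + ?x = 2 * y"
      using stanley_set_greedy[OF nbase, of ?x] maxN M_lt_m nset by auto
    have y4: "y < 4 * m" "z < 4 * m" using yz r by auto
    have Y: "y \<in> Ast \<or> (\<exists>c\<in>Ast. y = m + c) \<or> (\<exists>c\<in>Ast. y = 3 * m + c)" using below_4m yz(1) y4 by blast
    have Z: "z \<in> Ast \<or> (\<exists>c\<in>Ast. z = m + c) \<or> (\<exists>c\<in>Ast. z = 3 * m + c)" using below_4m yz(2) y4 by blast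
    from Y show ?thesis
    proof (elim disjE bexE)
      assume "y \<in> Ast" then show ?thesis using Ast_le M_lt_m yz by fastforce
    next
      fix cy assume cy: "cy \<in> Ast" "y = m + cy"
      from Z show ?thesis
      proof (elim disjE bexE)
        assume zA: "z \<in> Ast"
        have "2 * cy = z + r + m" using cy yz by simp
        then show ?thesis using zA cy False by auto
      next
        fix cz assume "cz \<in> Ast" "z = m + cz"
        then show ?thesis using cy yz Ast_le[of cy] Ast_le[of cz] M_lt_m by linarith
      next
        fix cz assume "cz \<in> Ast" "z = 3 * m + cz"
        then show ?thesis using cy yz Ast_le[of cy] Ast_le[of cz] M_lt_m by linarith
      qed
    next
      fix cy assume cy: "cy \<in> Ast" "y = 3 * m + cy"
      from Z show ?thesis
      proof (elim disjE bexE)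
        assume "z \<in> Ast" then show ?thesis using cy yz Ast_le[of cy] Ast_le[of z] M_lt_m r by linarith
      next
        fix cz assume "cz \<in> Ast" "z = m + cz"
        then show ?thesis using cy yz Ast_le[of cy] Ast_le[of cz] M_lt_m r by linarith
      next
        fix cz assume cz: "cz \<in> Ast" "z = 3 * m + cz"
        then have "cz < cy" "cy < r" "cz + r = 2 * cy" using cy yz by auto
        then show ?thesis using cy cz by blast
      qed
    qed
  qed
qed


lemma digit_lt: "v < u \<Longrightarrow> c < m \<Longrightarrow> m * v + c < m * u + c'"
proof -
  assume "v < u" "c < m"
  then have "m * (v + 1) \<le> m * u" by (intro mult_le_mono2) simp
  then show ?thesis using \<open>c < m\<close> by (simp add: algebra_simps)
qed

lemma mlin: "v + q = w \<Longrightarrow> m * v + m * q = m * w"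
  by (metis distrib_left)

lemma ap_digits:
  fixes b1 b2 b3 c1 c2 c3 :: nat
  assumes e: "(m * b1 + c1) + (m * b3 + c3) = 2 * (m * b2 + c2)" and c: "c1 < m" "c2 < m" "c3 < m"
  shows "(b1 + b3 = 2 * b2 \<and> c1 + c3 = 2 * c2) \<or> (b1 + b3 = 2 * b2 + 1 \<and> c1 + c3 + m = 2 * c2)
     \<or> (b1 + b3 + 1 = 2 * b2 \<and> c1 + c3 = 2 * c2 + m)"
proof -
  have e': "m * (b1 + b3) + (c1 + c3) = m * (2 * b2) + 2 * c2" using e by (simp add: algebra_simps)
  consider "b1 + b3 \<ge> 2 * b2 + 2" | "b1 + b3 = 2 * b2 + 1" | "b1 + b3 = 2 * b2"
    | "b1 + b3 + 1 = 2 * b2" | "b1 + b3 + 2 \<le> 2 * b2" by linarith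
  then show ?thesis
  proof cases
    case 1
    then have "m * (b1 + b3) \<ge> m * (2 * b2 + 2)" by (intro mult_le_mono2)
    then have "m * (b1 + b3) \<ge> m * (2 * b2) + 2 * m" by (simp add: algebra_simps)
    then show ?thesis using e' c by linarith
  next
    case 2
    then have "m * (b1 + b3) = m * (2 * b2) + m" by (simp add: algebra_simps)
    then show ?thesis using e' 2 by linarith
  next
    case 3
    then show ?thesis using e' by simp
  next
    case 4
    then have "m * (b1 + b3) + m = m * (2 * b2)" by (metis distrib_left mult.right_neutral)
    then show ?thesis using e' 4 by linarith
  next
    case 5
    then have "m * (b1 + b3 + 2) \<le> m * (2 * b2)" by (intro mult_le_mono2)
    then have "m * (b1 + b3) + 2 * m \<le> m * (2 * b2)" by (simp add: algebra_simps)
    then show ?thesis using e' c by linarith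
  qed
qed

definition T :: "nat set \<Rightarrow> nat set" where
  "T B = {stanley_seq A (2^k) * b + a | a b. a \<in> stanley_seq A ` {..<2^k} \<and> b \<in> stanley_set B}"

lemma T_iff: "x \<in> T B \<longleftrightarrow> (\<exists>c b. x = m * b + c \<and> c \<in> Ast \<and> b \<in> stanley_set B)"
  unfolding T_def by blast

lemma T_I: "c \<in> Ast \<Longrightarrow> b \<in> stanley_set B \<Longrightarrow> m * b + c \<in> T B"
  unfolding T_iff by blast

lemma T_tf:
  assumes B: "stanley_base B" shows "three_free (T B)"
  unfolding three_free_def
proof (intro ballI impI notI)
  fix x y z assume xyz: "x \<in> T B" "y \<in> T B" "z \<in> T B" "x < y \<and> y < z" and ap: "x + z = 2 * y"
  obtain c1 b1 where 1: "x = m * b1 + c1" "c1 \<in> Ast" "b1 \<in> stanley_set B" using xyz(1) T_iff by blast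
  obtain c2 b2 where 2: "y = m * b2 + c2" "c2 \<in> Ast" "b2 \<in> stanley_set B" using xyz(2) T_iff by blast
  obtain c3 b3 where 3: "z = m * b3 + c3" "c3 \<in> Ast" "b3 \<in> stanley_set B" using xyz(3) T_iff by blast
  have cl: "c1 < m" "c2 < m" "c3 < m" using 1 2 3 Ast_lt by auto
  have tB: "three_free (stanley_set B)" using stanley_set_tf[OF B] .
  from ap_digits[OF _ cl] ap 1 2 3
  have "(b1 + b3 = 2 * b2 \<and> c1 + c3 = 2 * c2) \<or> (b1 + b3 = 2 * b2 + 1 \<and> c1 + c3 + m = 2 * c2)
     \<or> (b1 + b3 + 1 = 2 * b2 \<and> c1 + c3 = 2 * c2 + m)" by simp
  then show False
  proof (elim disjE conjE)
    assume bb: "b1 + b3 = 2 * b2" and cc: "c1 + c3 = 2 * c2"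
    consider "b1 = b3" | "b1 < b3" | "b3 < b1" by linarith
    then show False
    proof cases
      case 1
      then have "b2 = b1" using bb by simp
      then have "c1 < c2" "c2 < c3" using xyz(4) \<open>x = _\<close> \<open>y = _\<close> \<open>z = _\<close> \<open>b1 = b3\<close> by auto
      then show False using cc tfA Ast_in \<open>c1 \<in> Ast\<close> \<open>c2 \<in> Ast\<close> \<open>c3 \<in> Ast\<close>
        unfolding three_free_def by blast
    next
      case 2
      then have "b1 < b2" "b2 < b3" using bb by auto
      then show False using bb tB \<open>b1 \<in> _\<close> \<open>b2 \<in> _\<close> \<open>b3 \<in> _\<close> unfolding three_free_def by blast
    next
      case 3
      then have "b3 < b2" "b2 < b1" using bb by auto
      then show False using bb tB \<open>b1 \<in> _\<close> \<open>b2 \<in> _\<close> \<open>b3 \<in> _\<close> unfolding three_free_def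
        by (metis add.commute)
    qed
  next
    assume cc: "c1 + c3 + m = 2 * c2"
    have "c3 < c2" "c2 < m + c1" using cc cl by linarith+
    moreover have "c3 + (m + c1) = 2 * c2" using cc by simp
    ultimately show False using tfA Ast_in m_Ast \<open>c1 \<in> Ast\<close> \<open>c2 \<in> Ast\<close> \<open>c3 \<in> Ast\<close>
      unfolding three_free_def by blast
  next
    assume cc: "c1 + c3 = 2 * c2 + m"
    have "c1 < m + c2" "m + c2 < m + c3" using cc cl by linarith+
    moreover have "c1 + (m + c3) = 2 * (m + c2)" using cc by simp
    ultimately show False using tfA Ast_in m_Ast \<open>c1 \<in> Ast\<close> \<open>c2 \<in> Ast\<close> \<open>c3 \<in> Ast\<close>
      unfolding three_free_def by blast
  qed
qed


lemma O_iff: "x \<in> otimes A k B \<longleftrightarrow> (\<exists>c b. x = m * b + c \<and> c \<in> Ast \<and> b \<in> B)"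
  unfolding otimes_def by blast

lemma O_img: "otimes A k B = (\<lambda>(c, b). m * b + c) ` (Ast \<times> B)"
  unfolding O_iff set_eq_iff by force

lemma O_sub_T: "otimes A k B \<subseteq> T B"
proof
  fix x assume "x \<in> otimes A k B"
  then have "\<exists>c b. x = m * b + c \<and> c \<in> Ast \<and> b \<in> B" by (simp only: O_iff)
  then obtain c b where cb: "x = m * b + c" "c \<in> Ast" "b \<in> B" by blast
  have "b \<in> stanley_set B" by (rule subsetD[OF stanley_set_sub cb(3)])
  then show "x \<in> T B" using T_I[OF cb(2)] cb(1) by simp
qed

lemma O_finite: "stanley_base B \<Longrightarrow> finite (otimes A k B)"
  unfolding O_img stanley_base_def by auto

lemma O_Max:
  assumes B: "stanley_base B" shows "Max (otimes A k B) = m * Max B + M"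
proof (rule Max_eqI)
  show "finite (otimes A k B)" using O_finite[OF B] .
  have fB: "finite B" "B \<noteq> {}" using B by (auto simp: stanley_base_def)
  have "Max B \<in> B" using fB by simp
  then have "\<exists>c b. m * Max B + M = m * b + c \<and> c \<in> Ast \<and> b \<in> B" using M_Ast by blast
  then show "m * Max B + M \<in> otimes A k B" by (simp only: O_iff)
  fix y assume "y \<in> otimes A k B"
  then have "\<exists>c b. y = m * b + c \<and> c \<in> Ast \<and> b \<in> B" by (simp only: O_iff)
  then obtain c b where cb: "y = m * b + c" "c \<in> Ast" "b \<in> B" by blast
  have "b \<le> Max B" using fB cb(3) by simp
  then have "m * b \<le> m * Max B" by (rule mult_le_mono2)
  moreover have "c \<le> M" using Ast_le cb(2) .
  ultimately show "y \<le> m * Max B + M" using cb(1) by linarith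
qed

lemma O_base: "stanley_base B \<Longrightarrow> stanley_base (otimes A k B)"
  unfolding stanley_base_def[of "otimes A k B"]
proof (intro conjI)
  assume B: "stanley_base B"
  show "finite (otimes A k B)" using O_finite[OF B] .
  have "0 \<in> B" using B by (simp add: stanley_base_def)
  then show "0 \<in> otimes A k B" unfolding O_iff using zero_Ast by force
  show "three_free (otimes A k B)" using tf_mono[OF T_tf[OF B] O_sub_T] .
qed

lemma T_low:
  assumes B: "stanley_base B" and x: "x \<le> Max (otimes A k B)"
  shows "x \<in> T B \<longleftrightarrow> x \<in> otimes A k B"
proof
  assume "x \<in> otimes A k B" then show "x \<in> T B" using O_sub_T by blast
next
  assume "x \<in> T B"
  then obtain c b where cb: "x = m * b + c" "c \<in> Ast" "b \<in> stanley_set B" using T_iff by blast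
  have "b \<le> Max B"
  proof (rule ccontr)
    assume "\<not> b \<le> Max B"
    then have "m * Max B + M < m * b + c" using digit_lt[of "Max B" b M] M_lt_m by simp
    then show False using x cb O_Max[OF B] by simp
  qed
  then have "b \<in> B" using stanley_set_low[OF B] cb by blast
  then show "x \<in> otimes A k B" using cb O_iff by blast
qed

lemma T_greedy:
  assumes B: "stanley_base B" and x: "Max (otimes A k B) < x" "x \<notin> T B"
  shows "\<exists>y\<in>T B. \<exists>z\<in>T B. z < y \<and> y < x \<and> z + x = 2 * y"
proof -
  define q where "q = x div m"
  define r where "r = x mod m"
  have mpos: "0 < m" using M_lt_m by simp
  have xqr: "x = m * q + r" unfolding q_def r_def by simp
  have rm: "r < m" unfolding r_def using mpos by simp
  have xbig: "m * Max B + M < m * q + r" using x O_Max[OF B] xqr by simp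
  have MB: "Max B \<in> stanley_set B" using B stanley_set_sub[of B]
    by (metis Max_in empty_iff stanley_base_def subsetD)
  have qge: "Max B \<le> q"
  proof (rule ccontr)
    assume "\<not> Max B \<le> q"
    then have "m * q + r < m * Max B + 0" using digit_lt[of q "Max B" r 0] rm by simp
    then show False using xbig by simp
  qed
  have qgt: "Max B < q" if "r \<le> M"
  proof (rule ccontr)
    assume "\<not> Max B < q" then have "q = Max B" using qge by simp
    then show False using xbig that by simp
  qed
  have SB: "Max B < u \<Longrightarrow> u \<notin> stanley_set B \<Longrightarrow>
      \<exists>v w. w \<in> stanley_set B \<and> v \<in> stanley_set B \<and> v < w \<and> w < u \<and> v + u = 2 * w" for u
    using stanley_set_greedy[OF B, of u] by blast
  show ?thesis
  proof (cases "r \<in> Ast")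
    case True
    then have "q \<notin> stanley_set B" using x(2) xqr T_I by blast
    moreover have "Max B < q" using qgt Ast_le True by blast
    ultimately obtain v w where vw: "w \<in> stanley_set B" "v \<in> stanley_set B" "v < w" "w < q" "v + q = 2 * w"
      using SB by blast
    have "m * v + r < m * w + r" "m * w + r < m * q + r" using digit_lt rm vw by auto
    moreover have "m * v + r + (m * q + r) = 2 * (m * w + r)" using mlin[OF vw(5)] by simp
    ultimately show ?thesis using T_I[OF True vw(1)] T_I[OF True vw(2)] xqr by blast
  next
    case False
    from cover[OF rm False] show ?thesis
    proof (elim disjE conjE bexE)
      fix cy cz assume c: "cy \<in> Ast" "cz \<in> Ast" "cz < cy" "cy < r" "cz + r = 2 * cy"
      show ?thesis
      proof (cases "q \<in> stanley_set B")
        case True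
        have "m * q + cz < m * q + cy" "m * q + cy < m * q + r" "m * q + cz + (m * q + r) = 2 * (m * q + cy)"
          using c by auto
        then show ?thesis using T_I[OF c(1) True] T_I[OF c(2) True] xqr by blast
      next
        case qn: False
        have "q \<noteq> Max B" using qn MB by auto
        then have "Max B < q" using qge by simp
        then obtain v w where vw: "w \<in> stanley_set B" "v \<in> stanley_set B" "v < w" "w < q" "v + q = 2 * w"
          using SB qn by blast
        have "m * v + cz < m * w + cy" "m * w + cy < m * q + r" using digit_lt rm vw Ast_lt c by auto
        moreover have "m * v + cz + (m * q + r) = 2 * (m * w + cy)" using mlin[OF vw(5)] c(5) by simp
        ultimately show ?thesis using T_I[OF c(1) vw(1)] T_I[OF c(2) vw(2)] xqr by blast
      qed
    next
      fix cy cz assume rM: "r \<le> M" and c: "cy \<in> Ast" "cz \<in> Ast" "2 * cy = cz + r + m"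
      have q1: "Max B < q" using qgt rM by simp
      then have q1': "q = Suc (q - 1)" by simp
      have mq: "m * q = m * (q - 1) + m" using q1' by (metis mult_Suc_right add.commute)
      have czy: "cz < cy" using c Ast_lt[of cy] by linarith
      show ?thesis
      proof (cases "q - 1 \<in> stanley_set B")
        case True
        have "m * (q - 1) + cz < m * (q - 1) + cy" "m * (q - 1) + cy < m * q + r"
          "m * (q - 1) + cz + (m * q + r) = 2 * (m * (q - 1) + cy)"
          using czy mq Ast_lt[of cy] c by auto
        then show ?thesis using T_I[OF c(1) True] T_I[OF c(2) True] xqr by blast
      next
        case qn: False
        have "q - 1 \<noteq> Max B" using qn MB by auto
        then have "Max B < q - 1" using q1 by simp
        then obtain v w where vw: "w \<in> stanley_set B" "v \<in> stanley_set B" "v < w" "w < q - 1" "v + (q - 1) = 2 * w"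
          using SB qn by blast
        have "m * v + cz < m * w + cy" "m * w + cy < m * q + r" using digit_lt rm vw Ast_lt c by auto
        moreover have "m * v + cz + (m * q + r) = 2 * (m * w + cy)"
          using mlin[OF vw(5)] c(3) mq by simp
        ultimately show ?thesis using T_I[OF c(1) vw(1)] T_I[OF c(2) vw(2)] xqr by blast
      qed
    qed
  qed
qed

lemma O_set:
  assumes B: "stanley_base B" shows "stanley_set (otimes A k B) = T B"
proof -
  have g: "gset (T B) (Max (otimes A k B))" unfolding gset_def using T_tf[OF B] T_greedy[OF B] by blast
  show ?thesis by (rule stanley_set_eqI[OF O_base[OF B] g]) (use T_low[OF B] in blast)
qed

lemma O_seq:
  assumes B: "stanley_base B"
  shows "stanley_seq (otimes A k B) n = m * stanley_seq B (n div 2^k) + a (n mod 2^k)"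
proof -
  let ?f = "\<lambda>n. m * stanley_seq B (n div 2^k) + a (n mod 2^k)"
  have sm: "strict_mono ?f"
  proof (rule strict_monoI)
    fix i j :: nat assume ij: "i < j"
    have am: "a (i mod 2^k) < m" using seq_less[OF base] by simp
    have "i div 2^k \<le> j div 2^k" using ij by (simp add: div_le_mono)
    then consider "i div 2^k < j div 2^k" | "i div 2^k = j div 2^k" by linarith
    then show "?f i < ?f j"
    proof cases
      case 1 then show ?thesis using digit_lt am seq_less[OF B] by auto
    next
      case 2
      then have "i mod 2^k < j mod 2^k" using ij
        by (metis div_mod_decomp le_neq_implies_less nat_add_left_cancel_le nat_less_le)
      then show ?thesis using 2 seq_less[OF base] by simp
    qed
  qed
  have rg: "range ?f = T B"
  proof
    show "range ?f \<subseteq> T B" using T_I seq_in[OF B] by auto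
    show "T B \<subseteq> range ?f"
    proof
      fix x assume "x \<in> T B"
      then obtain c b where cb: "x = m * b + c" "c \<in> Ast" "b \<in> stanley_set B" using T_iff by blast
      obtain i where i: "i < 2^k" "c = a i" using cb by auto
      obtain j where j: "b = stanley_seq B j" using cb seq_range[OF B] by blast
      have "(2^k * j + i) div 2^k = j" "(2^k * j + i) mod 2^k = i" using i by auto
      then have "x = ?f (2^k * j + i)" using cb i j by simp
      then show "x \<in> range ?f" by blast
    qed
  qed
  show ?thesis using seq_eqI[OF O_base[OF B] sm] rg O_set[OF B] by simp
qed


lemma O_block:
  assumes B: "stanley_base B" and i: "i < 2^k"
  shows "stanley_seq (otimes A k B) (2^k * j + i) = m * stanley_seq B j + a i"
  using O_seq[OF B] i by simp

lemma O_block0: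
  assumes B: "stanley_base B"
  shows "stanley_seq (otimes A k B) (2^k * j) = m * stanley_seq B j"
  using O_block[OF B, of 0 j] seq_0[OF base] by simp

lemma O_split:
  assumes B: "stanley_base B"
  shows "stanley_seq (otimes A k B) i = m * stanley_seq B (i div 2^k) + a (i mod 2^k)"
  using O_seq[OF B] .

lemma jump_alg:
  fixes c2 c1 :: int and lc :: int
  assumes "c2 = 2 * c1 - lc + 1"
  shows "int m * c2 = 2 * (int m * c1 + int M) - (int m * lc + lam) + 1"
proof -
  have "int m * c2 = int m * (2 * c1 - lc + 1)" using assms by simp
  also have "\<dots> = 2 * (int m * c1) - int m * lc + int m" by (simp add: algebra_simps)
  finally have "int m * c2 = 2 * (int m * c1) - int m * lc + int m" .
  then show ?thesis using jump1 by (smt (verit))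
qed

lemma indep_prod:
  assumes C: "independent_with C lc"
  shows "independent_with (otimes A k C) (int m * lc + lam)"
proof -
  have Cb: "stanley_base C" using C by (simp add: independent_with_def)
  obtain K where K: "\<forall>L\<ge>K. \<forall>i<2^L.
        int (stanley_seq C (2^L + i)) = int (stanley_seq C (2^L)) + int (stanley_seq C i) \<and>
        int (stanley_seq C (2^L)) = 2 * int (stanley_seq C (2^L - 1)) - lc + 1"
    using C unfolding independent_with_def by blast
  let ?P = "stanley_seq (otimes A k C)" and ?c = "stanley_seq C"
  have "\<forall>K'\<ge>K + k. \<forall>i<2^K'.
        int (?P (2^K' + i)) = int (?P (2^K')) + int (?P i) \<and>
        int (?P (2^K')) = 2 * int (?P (2^K' - 1)) - (int m * lc + lam) + 1"
  proof (intro allI impI)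
    fix K' i :: nat assume K': "K + k \<le> K'" and i: "i < 2^K'"
    define L where "L = K' - k"
    have KL: "K' = L + k" "K \<le> L" using K' unfolding L_def by auto
    have pw: "(2::nat)^K' = 2^k * 2^L" using KL by (simp add: power_add)
    define j where "j = i div 2^k"
    define r where "r = i mod 2^k"
    have ijr: "i = 2^k * j + r" "r < 2^k" unfolding j_def r_def by auto
    have jL: "j < 2^L" using i ijr pw
      by (metis add_lessD1 mult_less_cancel1 zero_less_numeral zero_less_power)
    have e1: "?P (2^K' + i) = m * ?c (2^L + j) + a r"
      using O_block[OF Cb ijr(2), of "2^L + j"] pw ijr by (simp add: algebra_simps)
    have e2: "?P (2^K') = m * ?c (2^L)" using O_block0[OF Cb, of "2^L"] pw by simp
    have e3: "?P i = m * ?c j + a r" using O_block[OF Cb ijr(2)] ijr by simp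
    have e4: "?P (2^K' - 1) = m * ?c (2^L - 1) + M"
    proof -
      have "(2::nat)^K' - 1 = 2^k * (2^L - 1) + (2^k - 1)" using pw
        by (simp add: algebra_simps)
      then show ?thesis using O_block[OF Cb, of "2^k - 1" "2^L - 1"] by simp
    qed
    have h1: "int (?c (2^L + j)) = int (?c (2^L)) + int (?c j)" using K KL jL by blast
    have h2: "int (?c (2^L)) = 2 * int (?c (2^L - 1)) - lc + 1" using K[rule_format, OF KL(2), of 0] by simp
    show "int (?P (2^K' + i)) = int (?P (2^K')) + int (?P i) \<and>
        int (?P (2^K')) = 2 * int (?P (2^K' - 1)) - (int m * lc + lam) + 1"
    proof
      have "int m * int (?c (2^L + j)) = int m * int (?c (2^L)) + int m * int (?c j)"
        using h1 by (simp add: algebra_simps)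
      then show "int (?P (2^K' + i)) = int (?P (2^K')) + int (?P i)" unfolding e1 e2 e3 by simp
      show "int (?P (2^K')) = 2 * int (?P (2^K' - 1)) - (int m * lc + lam) + 1"
        unfolding e2 e4 using jump_alg[OF h2] by simp
    qed
  qed
  then show ?thesis unfolding independent_with_def using O_base[OF Cb] by blast
qed


lemma reg_prod:
  assumes R: "regular_with B lb sb"
  shows "regular_with (otimes A k B) (int m * lb + lam) (2^k * sb)"
proof -
  have Bb: "stanley_base B" using R by (simp add: regular_with_def)
  obtain C K where C: "independent_with C lb" and K: "\<forall>L\<ge>K. regular_eqs B C lb sb L"
    using R unfolding regular_with_def by blast
  have Cb: "stanley_base C" using C by (simp add: independent_with_def)
  let ?P = "stanley_seq (otimes A k B)" and ?b = "stanley_seq B" and ?C' = "otimes A k C"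
  have "\<forall>K'\<ge>K + k. regular_eqs (otimes A k B) ?C' (int m * lb + lam) (2^k * sb) K'"
  proof (intro allI impI)
    fix K' :: nat assume K': "K + k \<le> K'"
    define L where "L = K' - k"
    have KL: "K' = L + k" "K \<le> L" using K' unfolding L_def by auto
    have pw: "(2::nat)^K' = 2^k * 2^L" using KL by (simp add: power_add)
    have pwi: "(2::int)^K' = 2^k * 2^L" using KL by (simp add: power_add)
    have eq: "regular_eqs B C lb sb L" using K KL by blast
    have sbL: "sb < 2^L" using regeq_lt[OF eq] .
    define n0 where "n0 = nat (2^L - sb)"
    have n0i: "int n0 = 2^L - sb" unfolding n0_def using sbL by simp
    have n0p: "1 \<le> n0" using n0i sbL by linarith
    have hh: "int (2^k * n0) = 2^K' - 2^k * sb"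
    proof -
      have "int (2^k * n0) = 2^k * int n0" by simp
      also have "\<dots> = 2^k * (2^L - sb)" using n0i by simp
      also have "\<dots> = 2^K' - 2^k * sb" using pwi by (simp add: right_diff_distrib)
      finally show ?thesis .
    qed
    have idx1: "nat (2^K' - 2^k * sb) = 2^k * n0" using hh by (metis nat_int)
    have idx2: "nat (2^K' - 2^k * sb - 1) = 2^k * (n0 - 1) + (2^k - 1)"
    proof -
      have "1 \<le> 2^k * n0" using n0p by (metis mult_le_mono one_le_numeral one_le_power nat_mult_1)
      then have "(2::int)^K' - 2^k * sb - 1 = int (2^k * n0 - 1)" using hh by (simp add: of_nat_diff)
      moreover have "2^k * n0 - 1 = 2^k * (n0 - 1) + (2^k - (1::nat))" using n0p
        by (simp add: algebra_simps)
      ultimately show ?thesis by simp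
    qed
    have idxB: "nat (2^L - sb - 1) = n0 - 1" unfolding n0_def using sbL by simp
    have Bj: "int (?b (n0 - 1 + 1)) = 2 * int (?b (n0 - 1)) - lb + 1"
      using regeq_jump[OF eq] idxB n0p unfolding n0_def[symmetric] by simp
    show "regular_eqs (otimes A k B) ?C' (int m * lb + lam) (2^k * sb) K'"
      unfolding regular_eqs_def
    proof (intro conjI allI impI)
      show "2^k * sb < 2^K'" using sbL pwi by simp
      fix i :: nat assume i: "i < 2^K'"
      define j where "j = i div 2^k"
      define r where "r = i mod 2^k"
      have ijr: "i = 2^k * j + r" "r < 2^k" unfolding j_def r_def by auto
      have jL: "j < 2^L" using i ijr pw
        by (metis add_lessD1 mult_less_cancel1 zero_less_numeral zero_less_power)
      have e1: "?P (2^k * n0 + i) = m * ?b (n0 + j) + a r"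
        using O_block[OF Bb ijr(2), of "n0 + j"] ijr by (simp add: algebra_simps)
      have e2: "?P (2^k * n0) = m * ?b n0" using O_block0[OF Bb] .
      have e3: "stanley_seq ?C' i = m * stanley_seq C j + a r" using O_block[OF Cb ijr(2)] ijr by simp
      have h1: "int (?b (n0 + j)) = int (?b n0) + int (stanley_seq C j)"
        using regeq_add[OF eq jL] unfolding n0_def[symmetric] .
      have "int m * int (?b (n0 + j)) = int m * int (?b n0) + int m * int (stanley_seq C j)"
        using h1 by (simp add: algebra_simps)
      then show "int (?P (nat (2^K' - 2^k * sb) + i)) = int (?P (nat (2^K' - 2^k * sb))) + int (stanley_seq ?C' i)"
        unfolding idx1 e1 e2 e3 by simp
      have e4: "?P (2^k * (n0 - 1) + (2^k - 1)) = m * ?b (n0 - 1) + M"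
        by (rule O_block[OF Bb]) simp
      have e5: "?P (2^k * n0) = m * ?b (n0 - 1 + 1)" using e2 n0p by simp
      show "int (?P (nat (2^K' - 2^k * sb))) = 2 * int (?P (nat (2^K' - 2^k * sb - 1))) - (int m * lb + lam) + 1"
        unfolding idx1 idx2 e4 e5 using jump_alg[OF Bj] by simp
    qed
  qed
  then show ?thesis unfolding regular_with_def using O_base[OF Bb] indep_prod[OF C] by blast
qed

lemma indep_back:
  assumes Bb: "stanley_base B" and P: "independent_with (otimes A k B) lp"
  shows "independent B"
proof -
  let ?P = "stanley_seq (otimes A k B)" and ?b = "stanley_seq B"
  obtain K where K: "\<forall>L\<ge>K. \<forall>i<2^L.
        int (?P (2^L + i)) = int (?P (2^L)) + int (?P i) \<and>
        int (?P (2^L)) = 2 * int (?P (2^L - 1)) - lp + 1"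
    using P unfolding independent_with_def by blast
  have mpos: "0 < m" using M_lt_m by simp
  define lb where "lb L = 2 * int (?b (2^L - 1)) - int (?b (2^L)) + 1" for L
  have key: "int (?b (2^L + j)) = int (?b (2^L)) + int (?b j) \<and> int m * lb L = lp - lam"
    if L: "K \<le> L" and j: "j < 2^L" for L j
  proof -
    have pw: "(2::nat)^(L + k) = 2^k * 2^L" by (simp add: power_add)
    have KL: "K \<le> L + k" using L by simp
    have ij: "2^k * j < 2^(L + k)" using j pw by simp
    have e1: "?P (2^(L+k) + 2^k * j) = m * ?b (2^L + j)"
      using O_block0[OF Bb, of "2^L + j"] pw by (simp add: algebra_simps)
    have e2: "?P (2^(L+k)) = m * ?b (2^L)" using O_block0[OF Bb, of "2^L"] pw by simp
    have e3: "?P (2^k * j) = m * ?b j" using O_block0[OF Bb] .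
    have e4: "?P (2^(L+k) - 1) = m * ?b (2^L - 1) + M"
    proof -
      have "(2::nat)^(L+k) - 1 = 2^k * (2^L - 1) + (2^k - 1)" using pw by (simp add: algebra_simps)
      then show ?thesis using O_block[OF Bb, of "2^k - 1" "2^L - 1"] by simp
    qed
    have h1: "int (?P (2^(L+k) + 2^k * j)) = int (?P (2^(L+k))) + int (?P (2^k * j))"
      using K KL ij by blast
    have h2: "int (?P (2^(L+k))) = 2 * int (?P (2^(L+k) - 1)) - lp + 1"
      using K[rule_format, OF KL, of 0] by simp
    have "m * ?b (2^L + j) = m * ?b (2^L) + m * ?b j" using h1 unfolding e1 e2 e3 by linarith
    then have "m * ?b (2^L + j) = m * (?b (2^L) + ?b j)" by (simp add: algebra_simps)
    then have A1: "?b (2^L + j) = ?b (2^L) + ?b j" using mpos by simp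
    have "int m * int (?b (2^L)) = 2 * (int m * int (?b (2^L - 1)) + int M) - lp + 1"
      using h2 unfolding e2 e4 by simp
    moreover have "int m * lb L = 2 * (int m * int (?b (2^L - 1))) - int m * int (?b (2^L)) + int m"
      unfolding lb_def by (simp add: algebra_simps)
    ultimately have "int m * lb L = lp - lam" using jump1 by (smt (verit))
    then show ?thesis using A1 by simp
  qed
  have "independent_with B (lb K)"
    unfolding independent_with_def
  proof (intro conjI exI allI impI)
    show "stanley_base B" using Bb .
    fix L i :: nat assume L: "K \<le> L" and i: "i < 2^L"
    show "int (?b (2^L + i)) = int (?b (2^L)) + int (?b i)" using key[OF L i] by blast
    have "int m * lb L = int m * lb K" using key[OF L i] key[of K 0] by simp
    then have "lb L = lb K" using mpos by simp
    then show "int (?b (2^L)) = 2 * int (?b (2^L - 1)) - lb K + 1" unfolding lb_def by simp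
  qed
  then show ?thesis unfolding independent_def by blast
qed

end


lemma regeq0_add: "regular_eqs X C l 0 k \<Longrightarrow> i < 2^k \<Longrightarrow>
   stanley_seq X (2^k + i) = stanley_seq X (2^k) + stanley_seq C i"
  using regeq_add[of X C l 0 k i] by (simp add: nat_power_eq)

lemma regeq0_jump: "regular_eqs X C l 0 k \<Longrightarrow>
   int (stanley_seq X (2^k)) = 2 * int (stanley_seq X (2^k - 1)) - l + 1"
proof -
  assume e: "regular_eqs X C l 0 k"
  have "nat ((2::int)^k - 1) = 2^k - 1" by (simp add: nat_diff_distrib nat_power_eq)
  then show ?thesis using regeq_jump[OF e] by (simp add: nat_power_eq)
qed

lemma indep_regeqs:
  assumes "independent_with A l" shows "\<exists>K. \<forall>k\<ge>K. regular_eqs A A l 0 k"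
proof -
  obtain K where K: "\<forall>k\<ge>K. \<forall>i<2^k.
        int (stanley_seq A (2^k + i)) = int (stanley_seq A (2^k)) + int (stanley_seq A i) \<and>
        int (stanley_seq A (2^k)) = 2 * int (stanley_seq A (2^k - 1)) - l + 1"
    using assms unfolding independent_with_def by blast
  have n1: "nat ((2::int)^k - 1) = 2^k - 1" for k by (simp add: nat_diff_distrib nat_power_eq)
  have "regular_eqs A A l 0 k" if "k \<ge> K" for k
    unfolding regular_eqs_def using K that by (simp add: nat_power_eq n1)
  then show ?thesis by blast
qed

theorem theorem2:
  fixes A B :: "nat set" and k :: nat
  assumes "independent A"
    and "regular B"
    and "adequate A k"
  shows "regular (otimes A k B)
    \<and> (independent (otimes A k B) \<longleftrightarrow> independent B)
    \<and> stanley_set (otimes A k B) =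
        {stanley_seq A (2^k) * b + a | a b. a \<in> stanley_seq A ` {..<2^k} \<and> b \<in> stanley_set B}
    \<and> character (otimes A k B) = int (stanley_seq A (2^k)) * character B + character A
    \<and> shift_index (otimes A k B) = 2^k * shift_index B"
proof -
  obtain l0 where IA: "independent_with A l0" using assms(1) unfolding independent_def by blast
  have bA: "stanley_base A" using IA by (simp add: independent_with_def)
  obtain K0 where E0: "\<forall>k\<ge>K0. regular_eqs A A l0 0 k" using indep_regeqs[OF IA] by blast
  have RA: "regular_with A l0 0" unfolding regular_with_def using bA IA E0 by blast
  have chA: "character A = l0" using character_eq[OF RA] .
  have shA: "shift_index A = 0" using shift_index_eq[OF RA] .
  obtain C0 where EC: "\<forall>k'\<ge>k. regular_eqs A C0 l0 0 k'"
    using assms(3) unfolding adequate_def chA shA by blast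
  have NUC: "\<forall>N. min_nucleating N A \<longrightarrow> stanley_seq A (2^k) \<notin> N"
    using assms(3) unfolding adequate_def shA by (simp add: nat_power_eq)
  have core: "stanley_seq C0 i = stanley_seq A i" for i
  proof -
    define K where "K = max K0 k + i"
    have iK: "i < 2^K" unfolding K_def by (meson le_add2 less_exp order_le_less_trans)
    have q1: "regular_eqs A C0 l0 0 K" using EC unfolding K_def by simp
    have q2: "regular_eqs A A l0 0 K" using E0 unfolding K_def by simp
    have "stanley_seq A (2^K + i) = stanley_seq A (2^K) + stanley_seq C0 i"
      using regeq0_add[OF q1 iK] .
    moreover have "stanley_seq A (2^K + i) = stanley_seq A (2^K) + stanley_seq A i"
      using regeq0_add[OF q2 iK] .
    ultimately show ?thesis by simp
  qed
  have ek: "regular_eqs A C0 l0 0 k" "regular_eqs A C0 l0 0 (Suc k)" using EC by auto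
  obtain N where Nmin: "nucleates N A" "\<forall>N'. nucleates N' A \<longrightarrow> card N \<le> card N'"
    using ex_has_least_nat[of "\<lambda>N. nucleates N A" A card] bA unfolding nucleates_def by blast
  have mN: "stanley_seq A (2^k) \<notin> N" using NUC Nmin unfolding min_nucleating_def by blast
  have Nb: "stanley_base N" and Ns: "stanley_set N = stanley_set A" using Nmin unfolding nucleates_def by auto
  have Nmax: "Max N < stanley_seq A (2^k)"
  proof (rule ccontr)
    assume "\<not> ?thesis"
    then have "stanley_seq A (2^k) \<le> Max N" by simp
    moreover have "stanley_seq A (2^k) \<in> stanley_set N" using Ns seq_in[OF bA] by simp
    ultimately have "stanley_seq A (2^k) \<in> N" using stanley_set_low[OF Nb] by blast
    then show False using mN by simp
  qed
  interpret P: pctx A k l0 N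
  proof
    show "stanley_base A" using bA .
    show "\<And>i. i < 2^k \<Longrightarrow> stanley_seq A (2^k + i) = stanley_seq A (2^k) + stanley_seq A i"
      using regeq0_add[OF ek(1)] core by simp
    show "int (stanley_seq A (2^k)) = 2 * int (stanley_seq A (2^k - 1)) - l0 + 1"
      using regeq0_jump[OF ek(1)] .
    show "\<And>i. i < 2^Suc k \<Longrightarrow> stanley_seq A (2^Suc k + i) = stanley_seq A (2^Suc k) + stanley_seq A i"
      using regeq0_add[OF ek(2)] core by simp
    show "int (stanley_seq A (2^Suc k)) = 2 * int (stanley_seq A (2^Suc k - 1)) - l0 + 1"
      using regeq0_jump[OF ek(2)] .
    show "stanley_base N" using Nb .
    show "stanley_set N = stanley_set A" using Ns .
    show "Max N < stanley_seq A (2^k)" using Nmax .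
  qed
  obtain lb sb where RB: "regular_with B lb sb" using assms(2) unfolding regular_def by blast
  have Bb: "stanley_base B" using RB by (simp add: regular_with_def)
  have RP: "regular_with (otimes A k B) (int (stanley_seq A (2^k)) * lb + l0) (2^k * sb)"
    using P.reg_prod[OF RB] .
  have r1: "regular (otimes A k B)" unfolding regular_def using RP by blast
  have r2: "independent (otimes A k B) \<longleftrightarrow> independent B"
  proof
    assume "independent (otimes A k B)"
    then obtain lp where "independent_with (otimes A k B) lp" unfolding independent_def by blast
    then show "independent B" using P.indep_back[OF Bb] by blast
  next
    assume "independent B"
    then obtain lb' where "independent_with B lb'" unfolding independent_def by blast
    then show "independent (otimes A k B)" using P.indep_prod unfolding independent_def by blast
  qed
  have r3: "stanley_set (otimes A k B) =
        {stanley_seq A (2^k) * b + a | a b. a \<in> stanley_seq A ` {..<2^k} \<and> b \<in> stanley_set B}"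
    using P.O_set[OF Bb] unfolding P.T_def .
  have r4: "character (otimes A k B) = int (stanley_seq A (2^k)) * character B + character A"
    using character_eq[OF RP] character_eq[OF RB] chA by simp
  have r5: "shift_index (otimes A k B) = 2^k * shift_index B"
    using shift_index_eq[OF RP] shift_index_eq[OF RB] by simp
  show ?thesis using r1 r2 r3 r4 r5 by blast
qed

end
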